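(* $\operatorname{BSR}(4,4)\ge 10$. In particular, the biquadratic form \[P(\mathbf{x},\mathbf{y})=x_1^2y_1^2+x_1^2y_2^2+x_2^2y_1^2+x_2^2y_3^2+x_3^2y_1^2+x_3^2y_4^2+x_4^2y_2^2+x_4^2y_3^2+x_4^2y_4^2+(x_1y_3+x_2y_4)^2\] on $\mathbb{R}^4\times\mathbb{R}^4$ has SOS rank $10$ (i.e., it cannot be written as a sum of fewer than 10 squares of bilinear forms).
   Context: An $m\times n$ biquadratic form is a polynomial $P(\mathbf{x},\mathbf{y})=\sum_{i,k=1}^m\sum_{j,l=1}^n a_{ijkl}x_ix_ky_jy_l$ with real coefficients, $\mathbf{x}\in\mathbb{R}^m$, $\mathbf{y}\in\mathbb{R}^n$. It is SOS if $P=\sum_{p=1}^r f_p^2$ for some real bilinear forms $f_p(\mathbf{x},\mathbf{y})=\sum_{i,j}c^{(p)}_{ij}x_iy_j$; the least such $r$ is the SOS rank $\operatorname{sos}(P)$. $\operatorname{BSR}(m,n)$ is the maximum of $\operatorname{sos}(P)$ over all $m\times n$ SOS biquadratic forms $P$. *)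

theory Defs
  imports Complex_Main
begin

text \<open>Vectors x in R^m and y in R^n are represented as functions nat => real,
  only the coordinates 0..m-1 (resp. 0..n-1) being used.
  Polynomials are identified with the real functions they define (over the reals
  this is injective on polynomials).\<close>

definition biquadratic_form :: "nat \<Rightarrow> nat \<Rightarrow> ((nat \<Rightarrow> real) \<Rightarrow> (nat \<Rightarrow> real) \<Rightarrow> real) \<Rightarrow> bool" where
  "biquadratic_form m n P \<longleftrightarrow>
     (\<exists>a :: nat \<Rightarrow> nat \<Rightarrow> nat \<Rightarrow> nat \<Rightarrow> real. \<forall>x y.
        P x y = (\<Sum>i<m. \<Sum>k<m. \<Sum>j<n. \<Sum>l<n. a i j k l * x i * x k * y j * y l))"

definition bilinear_form :: "nat \<Rightarrow> nat \<Rightarrow> ((nat \<Rightarrow> real) \<Rightarrow> (nat \<Rightarrow> real) \<Rightarrow> real) \<Rightarrow> bool" where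
  "bilinear_form m n f \<longleftrightarrow>
     (\<exists>c :: nat \<Rightarrow> nat \<Rightarrow> real. \<forall>x y. f x y = (\<Sum>i<m. \<Sum>j<n. c i j * x i * y j))"

definition sos_with :: "nat \<Rightarrow> nat \<Rightarrow> ((nat \<Rightarrow> real) \<Rightarrow> (nat \<Rightarrow> real) \<Rightarrow> real) \<Rightarrow> nat \<Rightarrow> bool" where
  "sos_with m n P r \<longleftrightarrow>
     (\<exists>f :: nat \<Rightarrow> (nat \<Rightarrow> real) \<Rightarrow> (nat \<Rightarrow> real) \<Rightarrow> real.
        (\<forall>p<r. bilinear_form m n (f p)) \<and> (\<forall>x y. P x y = (\<Sum>p<r. (f p x y)^2)))"

definition is_sos :: "nat \<Rightarrow> nat \<Rightarrow> ((nat \<Rightarrow> real) \<Rightarrow> (nat \<Rightarrow> real) \<Rightarrow> real) \<Rightarrow> bool" where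
  "is_sos m n P \<longleftrightarrow> (\<exists>r. sos_with m n P r)"

definition sos_rank :: "nat \<Rightarrow> nat \<Rightarrow> ((nat \<Rightarrow> real) \<Rightarrow> (nat \<Rightarrow> real) \<Rightarrow> real) \<Rightarrow> nat" where
  "sos_rank m n P = (LEAST r. sos_with m n P r)"

definition BSR :: "nat \<Rightarrow> nat \<Rightarrow> nat" where
  "BSR m n = Max {sos_rank m n P | P. biquadratic_form m n P \<and> is_sos m n P}"

end

theory Submission
  imports Defs
begin

definition BB :: "nat \<Rightarrow> nat \<Rightarrow> (nat \<Rightarrow> nat \<Rightarrow> real) \<Rightarrow> (nat \<Rightarrow> real) \<Rightarrow> (nat \<Rightarrow> real) \<Rightarrow> real" where
  "BB m n c x y = (\<Sum>i<m. \<Sum>j<n. c i j * x i * y j)"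

lemma BB_sum: "BB m n (\<lambda>i j. (\<Sum>q<r. \<beta> q * d q i j)) x y = (\<Sum>q<r. \<beta> q * BB m n (d q) x y)"
proof -
  have "BB m n (\<lambda>i j. (\<Sum>q<r. \<beta> q * d q i j)) x y = (\<Sum>i<m. \<Sum>j<n. \<Sum>q<r. \<beta> q * (d q i j * x i * y j))"
    unfolding BB_def by (simp add: sum_distrib_left sum_distrib_right mult_ac)
  also have "\<dots> = (\<Sum>q<r. \<Sum>i<m. \<Sum>j<n. \<beta> q * (d q i j * x i * y j))"
    by (simp add: sum.swap[of _ "{..<r}"])
  also have "\<dots> = (\<Sum>q<r. \<beta> q * BB m n (d q) x y)"
    unfolding BB_def by (simp add: sum_distrib_left)
  finally show ?thesis .
qed

lemma BB_diff: "BB m n (\<lambda>i j. c i j - e i j) x y = BB m n c x y - BB m n e x y"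
  unfolding BB_def by (simp add: left_diff_distrib sum_subtractf)

lemma BB_scale: "BB m n (\<lambda>i j. \<alpha> * e i j) x y = \<alpha> * BB m n e x y"
  unfolding BB_def by (simp add: sum_distrib_left mult_ac)

lemma BB_lin: "BB m n (\<lambda>i j. c i j - \<alpha> * (\<Sum>q<r. \<beta> q * d q i j)) x y
   = BB m n c x y - \<alpha> * (\<Sum>q<r. \<beta> q * BB m n (d q) x y)"
  by (simp only: BB_diff BB_scale BB_sum)

lemma BB_zero: "(\<And>i j. i < m \<Longrightarrow> j < n \<Longrightarrow> c i j = 0) \<Longrightarrow> BB m n c x y = 0"
  unfolding BB_def by simp

lemma complete_sq:
  fixes F k :: "nat \<Rightarrow> real"
  assumes a: "a = (\<Sum>p<r. (k p)^2)" "a \<noteq> 0" and S: "S = (\<Sum>q<r. k q * F q)"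
  shows "(\<Sum>p<r. (F p - k p / a * S)^2) + (S / sqrt a)^2 = (\<Sum>p<r. (F p)^2)"
proof -
  have apos: "a > 0" using a by (metis sum_nonneg zero_le_power2 order_le_less)
  have "(\<Sum>p<r. (F p - k p / a * S)^2) = (\<Sum>p<r. (F p)^2) - 2 * (S / a) * (\<Sum>p<r. k p * F p) + (S/a)^2 * (\<Sum>p<r. (k p)^2)"
    by (simp add: power2_diff sum.distrib sum_subtractf sum_distrib_left power_mult_distrib power_divide algebra_simps sum_divide_distrib)
  also have "\<dots> = (\<Sum>p<r. (F p)^2) - S^2 / a"
  proof -
    have k2: "(\<Sum>p<r. (k p)^2) = a" using a by simp
    have kF: "(\<Sum>p<r. k p * F p) = S" using S by simp
    show ?thesis unfolding k2 kF using apos by (simp add: power2_eq_square field_simps)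
  qed
  finally have "(\<Sum>p<r. (F p - k p / a * S)^2) = (\<Sum>p<r. (F p)^2) - S^2 / a" .
  moreover have "(S / sqrt a)^2 = S^2 / a" using apos by (simp add: power_divide)
  ultimately show ?thesis by simp
qed

lemma reduce:
  fixes D :: "(nat \<times> nat) set"
  assumes "finite D"
  shows "\<forall>(r::nat) c. (\<forall>p<r. \<forall>i j. (i,j) \<notin> D \<longrightarrow> c p i j = 0) \<longrightarrow>
    (\<exists>r' c'. r' \<le> card D \<and> (\<forall>p<r'. \<forall>i j. (i,j) \<notin> D \<longrightarrow> c' p i j = 0) \<and>
      (\<forall>x y. (\<Sum>p<r. (BB m n (c p) x y)^2) = (\<Sum>p<r'. (BB m n (c' p) x y)^2)))"
  using assms
proof (induction D rule: finite_induct)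
  case empty
  show ?case
  proof (intro allI impI)
    fix r and c :: "nat \<Rightarrow> nat \<Rightarrow> nat \<Rightarrow> real" assume "\<forall>p<r. \<forall>i j. (i, j) \<notin> ({}::(nat\<times>nat) set) \<longrightarrow> c p i j = 0"
    then have "\<forall>p<r. \<forall>x y. BB m n (c p) x y = 0" by (simp add: BB_def)
    then show "\<exists>r' c'. r' \<le> card ({}::(nat\<times>nat) set) \<and> (\<forall>p<r'. \<forall>i j. (i,j) \<notin> {} \<longrightarrow> c' p i j = 0) \<and>
      (\<forall>x y. (\<Sum>p<r. (BB m n (c p) x y)^2) = (\<Sum>p<r'. (BB m n (c' p) x y)^2))"
      by (intro exI[of _ 0]) simp
  qed
next
  case (insert e D)
  obtain i0 j0 where e: "e = (i0, j0)" by fastforce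
  show ?case
  proof (intro allI impI)
    fix r and c :: "nat \<Rightarrow> nat \<Rightarrow> nat \<Rightarrow> real" assume supp: "\<forall>p<r. \<forall>i j. (i, j) \<notin> insert e D \<longrightarrow> c p i j = (0::real)"
    define a where "a = (\<Sum>p<r. (c p i0 j0)^2)"
    show "\<exists>r' c'. r' \<le> card (insert e D) \<and> (\<forall>p<r'. \<forall>i j. (i,j) \<notin> insert e D \<longrightarrow> c' p i j = 0) \<and>
      (\<forall>x y. (\<Sum>p<r. (BB m n (c p) x y)^2) = (\<Sum>p<r'. (BB m n (c' p) x y)^2))"
    proof (cases "a = 0")
      case True
      then have "\<forall>p\<in>{..<r}. (c p i0 j0)^2 = 0" unfolding a_def
        by (subst sum_nonneg_eq_0_iff[symmetric]) auto
      then have z0: "\<forall>p<r. c p i0 j0 = 0" by simp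
      have "\<forall>p<r. \<forall>i j. (i, j) \<notin> D \<longrightarrow> c p i j = 0"
      proof (intro allI impI)
        fix p i j assume p: "p < r" and ij: "(i, j) \<notin> D"
        show "c p i j = 0"
        proof (cases "(i, j) = e")
          case True then show ?thesis using z0 p e by simp
        next
          case False then show ?thesis using supp p ij by simp
        qed
      qed
      then obtain r' c' where r': "r' \<le> card D" "\<forall>p<r'. \<forall>i j. (i,j) \<notin> D \<longrightarrow> c' p i j = 0"
          "\<forall>x y. (\<Sum>p<r. (BB m n (c p) x y)^2) = (\<Sum>p<r'. (BB m n (c' p) x y)^2)"
        using insert.IH by blast
      show ?thesis
        by (intro exI[of _ r'] exI[of _ c']) (use r' insert.hyps in auto)
    next
      case False
      define g where "g p i j = c p i j - c p i0 j0 / a * (\<Sum>q<r. c q i0 j0 * c q i j)" for p i j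
      have gs: "\<forall>p<r. \<forall>i j. (i, j) \<notin> D \<longrightarrow> g p i j = 0"
      proof (intro allI impI)
        fix p i j assume p: "p < r" and ij: "(i,j) \<notin> D"
        show "g p i j = 0"
        proof (cases "(i,j) = e")
          case True
          then show ?thesis using False by (simp add: g_def e a_def power2_eq_square)
        next
          case False
          then have "\<forall>q<r. c q i j = 0" using supp ij by auto
          then show ?thesis using p by (simp add: g_def)
        qed
      qed
      then obtain r'' c'' where r'': "r'' \<le> card D" "\<forall>p<r''. \<forall>i j. (i,j) \<notin> D \<longrightarrow> c'' p i j = 0"
          "\<forall>x y. (\<Sum>p<r. (BB m n (g p) x y)^2) = (\<Sum>p<r''. (BB m n (c'' p) x y)^2)"
        using insert.IH by blast
      define h where "h i j = (\<Sum>q<r. (c q i0 j0 / sqrt a) * c q i j)" for i j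
      define c' where "c' p = (if p < r'' then c'' p else h)" for p
      have hs: "\<forall>i j. (i,j) \<notin> insert e D \<longrightarrow> h i j = 0"
        using supp by (simp add: h_def)
      show ?thesis
      proof (intro exI[of _ "Suc r''"] exI[of _ c'] conjI allI impI)
        show "Suc r'' \<le> card (insert e D)" using r''(1) insert.hyps by simp
      next
        fix p i j assume "p < Suc r''" "(i, j) \<notin> insert e D"
        then show "c' p i j = 0" using r''(2) hs by (auto simp: c'_def)
      next
        fix x y
        define F where "F p = BB m n (c p) x y" for p
        define S where "S = (\<Sum>q<r. c q i0 j0 * F q)"
        have Bg: "BB m n (g p) x y = F p - c p i0 j0 / a * S" for p
          unfolding g_def F_def S_def by (rule BB_lin)
        have Bh: "BB m n h x y = S / sqrt a"
          unfolding h_def F_def S_def by (simp only: BB_sum) (simp add: sum_divide_distrib)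
        have "(\<Sum>p<Suc r''. (BB m n (c' p) x y)^2) = (\<Sum>p<r''. (BB m n (c'' p) x y)^2) + (BB m n h x y)^2"
          by (simp add: c'_def)
        also have "\<dots> = (\<Sum>p<r. (F p - c p i0 j0 / a * S)^2) + (S / sqrt a)^2"
          using r''(3)[rule_format, of x y, symmetric] Bg Bh by simp
        also have "\<dots> = (\<Sum>p<r. (F p)^2)"
          by (rule complete_sq[OF a_def False S_def])
        finally show "(\<Sum>p<r. (BB m n (c p) x y)^2) = (\<Sum>p<Suc r''. (BB m n (c' p) x y)^2)"
          by (simp add: F_def)
      qed
    qed
  qed
qed

definition gg :: "(nat\<Rightarrow>nat\<Rightarrow>nat\<Rightarrow>real) \<Rightarrow> nat \<Rightarrow> nat\<Rightarrow>nat\<Rightarrow>nat\<Rightarrow>nat\<Rightarrow>real" where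
  "gg C r i j k l = (\<Sum>p<r. C p i j * C p k l)"
lemma gg_sym_ord: "k < i \<or> (k = i \<and> l < j) \<Longrightarrow> gg C r i j k l = gg C r k l i j"
  by (simp add: gg_def mult.commute)
definition vec4 :: "real \<Rightarrow> real \<Rightarrow> real \<Rightarrow> real \<Rightarrow> nat \<Rightarrow> real" where
  "vec4 a b c d = (\<lambda>k. if k = 0 then a else if k = 1 then b else if k = 2 then c else if k = 3 then d else 0)"
lemma sum4: "(\<Sum>i<(4::nat). f i) = f 0 + f 1 + f 2 + (f 3::real)"
  by (simp add: eval_nat_numeral)

lemma gg_zero:
  assumes "gg C r i j i j = 0" shows "gg C r i j k l = 0"
proof -
  have "(\<Sum>p<r. (C p i j)^2) = 0" using assms by (simp add: gg_def power2_eq_square)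
  then have "\<forall>p\<in>{..<r}. (C p i j)^2 = 0"
    by (subst sum_nonneg_eq_0_iff[symmetric]) auto
  then show ?thesis by (simp add: gg_def)
qed

lemma gg_eq:
  assumes "gg C r i j i j = 1" "gg C r k l k l = 1" "gg C r i j k l = 1"
  shows "gg C r k l a b = gg C r i j a b"
proof -
  have e: "(\<Sum>p<r. (C p i j - C p k l)^2) = gg C r i j i j - 2 * gg C r i j k l + gg C r k l k l"
    by (simp add: gg_def power2_eq_square algebra_simps sum.distrib sum_subtractf sum_distrib_left)
  have "(\<Sum>p<r. (C p i j - C p k l)^2) = 0" using e assms by simp
  then have "\<forall>p\<in>{..<r}. (C p i j - C p k l)^2 = 0"
    by (subst sum_nonneg_eq_0_iff[symmetric]) auto
  then have "\<forall>p\<in>{..<r}. C p k l = C p i j" by simp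
  then show ?thesis unfolding gg_def by (intro sum.cong) auto
qed

lemma bessel:
  fixes v :: "'a \<Rightarrow> nat \<Rightarrow> real"
  assumes fin: "finite T"
    and orth: "\<And>s t. s \<in> T \<Longrightarrow> t \<in> T \<Longrightarrow> (\<Sum>p<r. v s p * v t p) = (if s = t then 1 else 0)"
  shows "card T \<le> r"
proof -
  have row: "(\<Sum>t\<in>T. (v t q)^2) \<le> 1" if q: "q < r" for q
  proof -
    define a where "a t = v t q" for t
    define w where "w p = (\<Sum>t\<in>T. a t * v t p)" for p
    define A where "A = (\<Sum>t\<in>T. (a t)^2)"
    have ww: "(\<Sum>p<r. (w p)^2) = A"
    proof -
      have "(\<Sum>p<r. (w p)^2) = (\<Sum>p<r. \<Sum>s\<in>T. \<Sum>t\<in>T. a s * a t * (v s p * v t p))"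
        unfolding w_def power2_eq_square sum_distrib_left sum_distrib_right
        by (intro sum.cong refl) (simp add: mult_ac)
      also have "\<dots> = (\<Sum>s\<in>T. \<Sum>t\<in>T. a s * a t * (\<Sum>p<r. v s p * v t p))"
        by (simp add: sum.swap[of _ "{..<r}"] sum_distrib_left)
      also have "\<dots> = (\<Sum>s\<in>T. \<Sum>t\<in>T. a s * a t * (if s = t then 1 else 0))"
        by (intro sum.cong refl) (simp add: orth)
      also have "\<dots> = A" using fin by (simp add: A_def power2_eq_square if_distrib cong: if_cong)
      finally show ?thesis .
    qed
    have wq: "(\<Sum>p<r. (if p = q then 1 else 0) * w p) = A"
    proof -
      have "(\<Sum>p<r. (if p = q then 1 else 0) * w p) = (\<Sum>p<r. if p = q then w q else 0)"
        by (intro sum.cong) auto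
      also have "\<dots> = w q" using q by simp
      finally show ?thesis by (simp add: w_def A_def a_def power2_eq_square)
    qed
    have dq: "(\<Sum>p<r. (if p = q then 1 else 0)^2) = (1::real)"
    proof -
      have "(\<Sum>p<r. (if p = q then 1 else 0)^2) = (\<Sum>p<r. if p = q then (1::real) else 0)"
        by (intro sum.cong) auto
      also have "\<dots> = 1" using q by simp
      finally show ?thesis .
    qed
    have "0 \<le> (\<Sum>p<r. ((if p = q then 1 else 0) - w p)^2)" by (intro sum_nonneg) simp
    also have "\<dots> = (\<Sum>p<r. (if p = q then 1 else 0)^2) - 2 * (\<Sum>p<r. (if p = q then 1 else 0) * w p) + (\<Sum>p<r. (w p)^2)"
      by (simp add: power2_diff sum.distrib sum_subtractf sum_distrib_left mult.assoc)
    also have "\<dots> = 1 - A" using ww wq dq by simp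
    finally show ?thesis by (simp add: A_def a_def)
  qed
  have "real (card T) = (\<Sum>t\<in>T. \<Sum>p<r. v t p * v t p)" by (simp add: orth)
  also have "\<dots> = (\<Sum>p<r. \<Sum>t\<in>T. (v t p)^2)" by (simp add: sum.swap[of _ T] power2_eq_square)
  also have "\<dots> \<le> (\<Sum>p<r. 1)" by (intro sum_mono) (simp add: row)
  finally show ?thesis by simp
qed

lemma Qexp: "(\<Sum>p<r. (\<Sum>i<m. \<Sum>j<n. C p i j * x i * y j)^2) =
   (\<Sum>i<m. \<Sum>j<n. \<Sum>k<m. \<Sum>l<n. gg C r i j k l * x i * y j * x k * y l)"
proof -
  have "(\<Sum>p<r. (\<Sum>i<m. \<Sum>j<n. C p i j * x i * y j)^2) =
     (\<Sum>p<r. \<Sum>i<m. \<Sum>j<n. \<Sum>k<m. \<Sum>l<n. (C p i j * x i * y j) * (C p k l * x k * y l))"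
    unfolding power2_eq_square sum_distrib_right sum_distrib_left by (simp add: mult.commute)
  also have "\<dots> = (\<Sum>i<m. \<Sum>j<n. \<Sum>k<m. \<Sum>l<n. \<Sum>p<r. (C p i j * x i * y j) * (C p k l * x k * y l))"
    by (simp add: sum.swap[of _ "{..<r}"])
  also have "\<dots> = (\<Sum>i<m. \<Sum>j<n. \<Sum>k<m. \<Sum>l<n. gg C r i j k l * x i * y j * x k * y l)"
    by (simp add: gg_def sum_distrib_left mult_ac)
  finally show ?thesis .
qed

lemma lower_core:
  assumes H: "\<And>x y. (x 0)^2 * (y 0)^2 + (x 0)^2 * (y 1)^2 + (x 1)^2 * (y 0)^2
      + (x 1)^2 * (y 2)^2 + (x 2)^2 * (y 0)^2 + (x 2)^2 * (y 3)^2 + (x 3)^2 * (y 1)^2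
      + (x 3)^2 * (y 2)^2 + (x 3)^2 * (y 3)^2 + (x 0 * y 2 + x 1 * y 3)^2
      = (\<Sum>i<4. \<Sum>j<4. \<Sum>k<4. \<Sum>l<4. gg C r i j k l * x i * y j * x k * y l)"
  shows "10 \<le> r"
proof -
  have d00: "gg C r 0 0 0 0 = 1"
    using H[of "vec4 1 0 0 0" "vec4 1 0 0 0"] by (simp add: sum4 vec4_def gg_sym_ord)
  have d01: "gg C r 0 1 0 1 = 1"
    using H[of "vec4 1 0 0 0" "vec4 0 1 0 0"] by (simp add: sum4 vec4_def gg_sym_ord)
  have d02: "gg C r 0 2 0 2 = 1"
    using H[of "vec4 1 0 0 0" "vec4 0 0 1 0"] by (simp add: sum4 vec4_def gg_sym_ord)
  have d03: "gg C r 0 3 0 3 = 0"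
    using H[of "vec4 1 0 0 0" "vec4 0 0 0 1"] by (simp add: sum4 vec4_def gg_sym_ord)
  have d10: "gg C r 1 0 1 0 = 1"
    using H[of "vec4 0 1 0 0" "vec4 1 0 0 0"] by (simp add: sum4 vec4_def gg_sym_ord)
  have d11: "gg C r 1 1 1 1 = 0"
    using H[of "vec4 0 1 0 0" "vec4 0 1 0 0"] by (simp add: sum4 vec4_def gg_sym_ord)
  have d12: "gg C r 1 2 1 2 = 1"
    using H[of "vec4 0 1 0 0" "vec4 0 0 1 0"] by (simp add: sum4 vec4_def gg_sym_ord)
  have d13: "gg C r 1 3 1 3 = 1"
    using H[of "vec4 0 1 0 0" "vec4 0 0 0 1"] by (simp add: sum4 vec4_def gg_sym_ord)
  have d20: "gg C r 2 0 2 0 = 1"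
    using H[of "vec4 0 0 1 0" "vec4 1 0 0 0"] by (simp add: sum4 vec4_def gg_sym_ord)
  have d21: "gg C r 2 1 2 1 = 0"
    using H[of "vec4 0 0 1 0" "vec4 0 1 0 0"] by (simp add: sum4 vec4_def gg_sym_ord)
  have d22: "gg C r 2 2 2 2 = 0"
    using H[of "vec4 0 0 1 0" "vec4 0 0 1 0"] by (simp add: sum4 vec4_def gg_sym_ord)
  have d23: "gg C r 2 3 2 3 = 1"
    using H[of "vec4 0 0 1 0" "vec4 0 0 0 1"] by (simp add: sum4 vec4_def gg_sym_ord)
  have d30: "gg C r 3 0 3 0 = 0"
    using H[of "vec4 0 0 0 1" "vec4 1 0 0 0"] by (simp add: sum4 vec4_def gg_sym_ord)
  have d31: "gg C r 3 1 3 1 = 1"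
    using H[of "vec4 0 0 0 1" "vec4 0 1 0 0"] by (simp add: sum4 vec4_def gg_sym_ord)
  have d32: "gg C r 3 2 3 2 = 1"
    using H[of "vec4 0 0 0 1" "vec4 0 0 1 0"] by (simp add: sum4 vec4_def gg_sym_ord)
  have d33: "gg C r 3 3 3 3 = 1"
    using H[of "vec4 0 0 0 1" "vec4 0 0 0 1"] by (simp add: sum4 vec4_def gg_sym_ord)
  have x0123: "gg C r 0 2 0 2 + 2 * gg C r 0 2 0 3 + 2 * gg C r 0 2 1 2 + 2 * gg C r 0 2 1 3 + gg C r 0 3 0 3 + 2 * gg C r 0 3 1 2 + 2 * gg C r 0 3 1 3 + gg C r 1 2 1 2 + 2 * gg C r 1 2 1 3 + gg C r 1 3 1 3 = 5"
    using H[of "vec4 1 1 0 0" "vec4 0 0 1 1"] by (simp add: sum4 vec4_def gg_sym_ord)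
  have zg0203: "gg C r 0 2 0 3 = 0"
    using gg_zero[OF d03, of 0 2] by (simp add: gg_sym_ord)
  have r123: "gg C r 1 2 1 2 + 2 * gg C r 1 2 1 3 + gg C r 1 3 1 3 = 2"
    using H[of "vec4 0 1 0 0" "vec4 0 0 1 1"] by (simp add: sum4 vec4_def gg_sym_ord)
  have c012: "gg C r 0 2 0 2 + 2 * gg C r 0 2 1 2 + gg C r 1 2 1 2 = 2"
    using H[of "vec4 1 1 0 0" "vec4 0 0 1 0"] by (simp add: sum4 vec4_def gg_sym_ord)
  have zg0313: "gg C r 0 3 1 3 = 0"
    using gg_zero[OF d03, of 1 3] by (simp add: gg_sym_ord)
  have zg0312: "gg C r 0 3 1 2 = 0"
    using gg_zero[OF d03, of 1 2] by (simp add: gg_sym_ord)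
  have g0213: "gg C r 0 2 1 3 = 1"
    using c012 d02 d03 d12 d13 r123 x0123 zg0203 zg0312 zg0313 by linarith
  have r001: "gg C r 0 0 0 0 + 2 * gg C r 0 0 0 1 + gg C r 0 1 0 1 = 2"
    using H[of "vec4 1 0 0 0" "vec4 1 1 0 0"] by (simp add: sum4 vec4_def gg_sym_ord)
  have tg0001: "gg C r 0 0 0 1 = 0"
    using d00 d01 r001 by linarith
  have r002: "gg C r 0 0 0 0 + 2 * gg C r 0 0 0 2 + gg C r 0 2 0 2 = 2"
    using H[of "vec4 1 0 0 0" "vec4 1 0 1 0"] by (simp add: sum4 vec4_def gg_sym_ord)
  have tg0002: "gg C r 0 0 0 2 = 0"
    using d00 d02 r002 by linarith
  have c010: "gg C r 0 0 0 0 + 2 * gg C r 0 0 1 0 + gg C r 1 0 1 0 = 2"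
    using H[of "vec4 1 1 0 0" "vec4 1 0 0 0"] by (simp add: sum4 vec4_def gg_sym_ord)
  have tg0010: "gg C r 0 0 1 0 = 0"
    using c010 d00 d10 by linarith
  have x0102: "gg C r 0 0 0 0 + 2 * gg C r 0 0 0 2 + 2 * gg C r 0 0 1 0 + 2 * gg C r 0 0 1 2 + gg C r 0 2 0 2 + 2 * gg C r 0 2 1 0 + 2 * gg C r 0 2 1 2 + gg C r 1 0 1 0 + 2 * gg C r 1 0 1 2 + gg C r 1 2 1 2 = 4"
    using H[of "vec4 1 1 0 0" "vec4 1 0 1 0"] by (simp add: sum4 vec4_def gg_sym_ord)
  have r102: "gg C r 1 0 1 0 + 2 * gg C r 1 0 1 2 + gg C r 1 2 1 2 = 2"
    using H[of "vec4 0 1 0 0" "vec4 1 0 1 0"] by (simp add: sum4 vec4_def gg_sym_ord)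
  have qg1013: "gg C r 1 0 1 3 = gg C r 0 2 1 0"
    using gg_eq[OF d02 d13 g0213, of 1 0] by (simp add: gg_sym_ord)
  have r103: "gg C r 1 0 1 0 + 2 * gg C r 1 0 1 3 + gg C r 1 3 1 3 = 2"
    using H[of "vec4 0 1 0 0" "vec4 1 0 0 1"] by (simp add: sum4 vec4_def gg_sym_ord)
  have tg0012: "gg C r 0 0 1 2 = 0"
    using c010 c012 d00 d02 d10 d12 d13 qg1013 r002 r102 r103 x0102 by linarith
  have c020: "gg C r 0 0 0 0 + 2 * gg C r 0 0 2 0 + gg C r 2 0 2 0 = 2"
    using H[of "vec4 1 0 1 0" "vec4 1 0 0 0"] by (simp add: sum4 vec4_def gg_sym_ord)
  have tg0020: "gg C r 0 0 2 0 = 0"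
    using c020 d00 d20 by linarith
  have x0203: "gg C r 0 0 0 0 + 2 * gg C r 0 0 0 3 + 2 * gg C r 0 0 2 0 + 2 * gg C r 0 0 2 3 + gg C r 0 3 0 3 + 2 * gg C r 0 3 2 0 + 2 * gg C r 0 3 2 3 + gg C r 2 0 2 0 + 2 * gg C r 2 0 2 3 + gg C r 2 3 2 3 = 3"
    using H[of "vec4 1 0 1 0" "vec4 1 0 0 1"] by (simp add: sum4 vec4_def gg_sym_ord)
  have zg0003: "gg C r 0 0 0 3 = 0"
    using gg_zero[OF d03, of 0 0] by (simp add: gg_sym_ord)
  have r203: "gg C r 2 0 2 0 + 2 * gg C r 2 0 2 3 + gg C r 2 3 2 3 = 2"
    using H[of "vec4 0 0 1 0" "vec4 1 0 0 1"] by (simp add: sum4 vec4_def gg_sym_ord)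
  have zg0323: "gg C r 0 3 2 3 = 0"
    using gg_zero[OF d03, of 2 3] by (simp add: gg_sym_ord)
  have zg0320: "gg C r 0 3 2 0 = 0"
    using gg_zero[OF d03, of 2 0] by (simp add: gg_sym_ord)
  have tg0023: "gg C r 0 0 2 3 = 0"
    using c020 d00 d03 d20 d23 r203 x0203 zg0003 zg0320 zg0323 by linarith
  have x0301: "gg C r 0 0 0 0 + 2 * gg C r 0 0 0 1 + 2 * gg C r 0 0 3 0 + 2 * gg C r 0 0 3 1 + gg C r 0 1 0 1 + 2 * gg C r 0 1 3 0 + 2 * gg C r 0 1 3 1 + gg C r 3 0 3 0 + 2 * gg C r 3 0 3 1 + gg C r 3 1 3 1 = 3"
    using H[of "vec4 1 0 0 1" "vec4 1 1 0 0"] by (simp add: sum4 vec4_def gg_sym_ord)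
  have zg3031: "gg C r 3 0 3 1 = 0"
    using gg_zero[OF d30, of 3 1] by (simp add: gg_sym_ord)
  have zg0030: "gg C r 0 0 3 0 = 0"
    using gg_zero[OF d30, of 0 0] by (simp add: gg_sym_ord)
  have c031: "gg C r 0 1 0 1 + 2 * gg C r 0 1 3 1 + gg C r 3 1 3 1 = 2"
    using H[of "vec4 1 0 0 1" "vec4 0 1 0 0"] by (simp add: sum4 vec4_def gg_sym_ord)
  have zg0130: "gg C r 0 1 3 0 = 0"
    using gg_zero[OF d30, of 0 1] by (simp add: gg_sym_ord)
  have tg0031: "gg C r 0 0 3 1 = 0"
    using c031 d00 d01 d30 d31 r001 x0301 zg0030 zg0130 zg3031 by linarith
  have x0302: "gg C r 0 0 0 0 + 2 * gg C r 0 0 0 2 + 2 * gg C r 0 0 3 0 + 2 * gg C r 0 0 3 2 + gg C r 0 2 0 2 + 2 * gg C r 0 2 3 0 + 2 * gg C r 0 2 3 2 + gg C r 3 0 3 0 + 2 * gg C r 3 0 3 2 + gg C r 3 2 3 2 = 3"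
    using H[of "vec4 1 0 0 1" "vec4 1 0 1 0"] by (simp add: sum4 vec4_def gg_sym_ord)
  have zg3032: "gg C r 3 0 3 2 = 0"
    using gg_zero[OF d30, of 3 2] by (simp add: gg_sym_ord)
  have c032: "gg C r 0 2 0 2 + 2 * gg C r 0 2 3 2 + gg C r 3 2 3 2 = 2"
    using H[of "vec4 1 0 0 1" "vec4 0 0 1 0"] by (simp add: sum4 vec4_def gg_sym_ord)
  have zg0230: "gg C r 0 2 3 0 = 0"
    using gg_zero[OF d30, of 0 2] by (simp add: gg_sym_ord)
  have tg0032: "gg C r 0 0 3 2 = 0"
    using c032 d00 d02 d30 d32 r002 x0302 zg0030 zg0230 zg3032 by linarith
  have x0303: "gg C r 0 0 0 0 + 2 * gg C r 0 0 0 3 + 2 * gg C r 0 0 3 0 + 2 * gg C r 0 0 3 3 + gg C r 0 3 0 3 + 2 * gg C r 0 3 3 0 + 2 * gg C r 0 3 3 3 + gg C r 3 0 3 0 + 2 * gg C r 3 0 3 3 + gg C r 3 3 3 3 = 2"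
    using H[of "vec4 1 0 0 1" "vec4 1 0 0 1"] by (simp add: sum4 vec4_def gg_sym_ord)
  have zg3033: "gg C r 3 0 3 3 = 0"
    using gg_zero[OF d30, of 3 3] by (simp add: gg_sym_ord)
  have zg0333: "gg C r 0 3 3 3 = 0"
    using gg_zero[OF d03, of 3 3] by (simp add: gg_sym_ord)
  have zg0330: "gg C r 0 3 3 0 = 0"
    using gg_zero[OF d03, of 3 0] by (simp add: gg_sym_ord)
  have tg0033: "gg C r 0 0 3 3 = 0"
    using d00 d03 d30 d33 x0303 zg0003 zg0030 zg0330 zg0333 zg3033 by linarith
  have r012: "gg C r 0 1 0 1 + 2 * gg C r 0 1 0 2 + gg C r 0 2 0 2 = 2"
    using H[of "vec4 1 0 0 0" "vec4 0 1 1 0"] by (simp add: sum4 vec4_def gg_sym_ord)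
  have tg0102: "gg C r 0 1 0 2 = 0"
    using d01 d02 r012 by linarith
  have x0101: "gg C r 0 0 0 0 + 2 * gg C r 0 0 0 1 + 2 * gg C r 0 0 1 0 + 2 * gg C r 0 0 1 1 + gg C r 0 1 0 1 + 2 * gg C r 0 1 1 0 + 2 * gg C r 0 1 1 1 + gg C r 1 0 1 0 + 2 * gg C r 1 0 1 1 + gg C r 1 1 1 1 = 3"
    using H[of "vec4 1 1 0 0" "vec4 1 1 0 0"] by (simp add: sum4 vec4_def gg_sym_ord)
  have zg1011: "gg C r 1 0 1 1 = 0"
    using gg_zero[OF d11, of 1 0] by (simp add: gg_sym_ord)
  have zg0111: "gg C r 0 1 1 1 = 0"
    using gg_zero[OF d11, of 0 1] by (simp add: gg_sym_ord)
  have zg0011: "gg C r 0 0 1 1 = 0"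
    using gg_zero[OF d11, of 0 0] by (simp add: gg_sym_ord)
  have tg0110: "gg C r 0 1 1 0 = 0"
    using c010 d00 d01 d10 d11 r001 x0101 zg0011 zg0111 zg1011 by linarith
  have x0112: "gg C r 0 1 0 1 + 2 * gg C r 0 1 0 2 + 2 * gg C r 0 1 1 1 + 2 * gg C r 0 1 1 2 + gg C r 0 2 0 2 + 2 * gg C r 0 2 1 1 + 2 * gg C r 0 2 1 2 + gg C r 1 1 1 1 + 2 * gg C r 1 1 1 2 + gg C r 1 2 1 2 = 3"
    using H[of "vec4 1 1 0 0" "vec4 0 1 1 0"] by (simp add: sum4 vec4_def gg_sym_ord)
  have zg1112: "gg C r 1 1 1 2 = 0"
    using gg_zero[OF d11, of 1 2] by (simp add: gg_sym_ord)
  have zg0211: "gg C r 0 2 1 1 = 0"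
    using gg_zero[OF d11, of 0 2] by (simp add: gg_sym_ord)
  have tg0112: "gg C r 0 1 1 2 = 0"
    using c012 d01 d02 d11 d12 r012 x0112 zg0111 zg0211 zg1112 by linarith
  have x0201: "gg C r 0 0 0 0 + 2 * gg C r 0 0 0 1 + 2 * gg C r 0 0 2 0 + 2 * gg C r 0 0 2 1 + gg C r 0 1 0 1 + 2 * gg C r 0 1 2 0 + 2 * gg C r 0 1 2 1 + gg C r 2 0 2 0 + 2 * gg C r 2 0 2 1 + gg C r 2 1 2 1 = 3"
    using H[of "vec4 1 0 1 0" "vec4 1 1 0 0"] by (simp add: sum4 vec4_def gg_sym_ord)
  have zg2021: "gg C r 2 0 2 1 = 0"
    using gg_zero[OF d21, of 2 0] by (simp add: gg_sym_ord)
  have zg0121: "gg C r 0 1 2 1 = 0"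
    using gg_zero[OF d21, of 0 1] by (simp add: gg_sym_ord)
  have zg0021: "gg C r 0 0 2 1 = 0"
    using gg_zero[OF d21, of 0 0] by (simp add: gg_sym_ord)
  have tg0120: "gg C r 0 1 2 0 = 0"
    using c020 d00 d01 d20 d21 r001 x0201 zg0021 zg0121 zg2021 by linarith
  have x0213: "gg C r 0 1 0 1 + 2 * gg C r 0 1 0 3 + 2 * gg C r 0 1 2 1 + 2 * gg C r 0 1 2 3 + gg C r 0 3 0 3 + 2 * gg C r 0 3 2 1 + 2 * gg C r 0 3 2 3 + gg C r 2 1 2 1 + 2 * gg C r 2 1 2 3 + gg C r 2 3 2 3 = 2"
    using H[of "vec4 1 0 1 0" "vec4 0 1 0 1"] by (simp add: sum4 vec4_def gg_sym_ord)
  have zg0103: "gg C r 0 1 0 3 = 0"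
    using gg_zero[OF d03, of 0 1] by (simp add: gg_sym_ord)
  have zg2123: "gg C r 2 1 2 3 = 0"
    using gg_zero[OF d21, of 2 3] by (simp add: gg_sym_ord)
  have zg0321: "gg C r 0 3 2 1 = 0"
    using gg_zero[OF d03, of 2 1] by (simp add: gg_sym_ord)
  have tg0123: "gg C r 0 1 2 3 = 0"
    using d01 d03 d21 d23 x0213 zg0103 zg0121 zg0321 zg0323 zg2123 by linarith
  have tg0131: "gg C r 0 1 3 1 = 0"
    using c031 d01 d31 by linarith
  have x0312: "gg C r 0 1 0 1 + 2 * gg C r 0 1 0 2 + 2 * gg C r 0 1 3 1 + 2 * gg C r 0 1 3 2 + gg C r 0 2 0 2 + 2 * gg C r 0 2 3 1 + 2 * gg C r 0 2 3 2 + gg C r 3 1 3 1 + 2 * gg C r 3 1 3 2 + gg C r 3 2 3 2 = 4"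
    using H[of "vec4 1 0 0 1" "vec4 0 1 1 0"] by (simp add: sum4 vec4_def gg_sym_ord)
  have r312: "gg C r 3 1 3 1 + 2 * gg C r 3 1 3 2 + gg C r 3 2 3 2 = 2"
    using H[of "vec4 0 0 0 1" "vec4 0 1 1 0"] by (simp add: sum4 vec4_def gg_sym_ord)
  have qg1331: "gg C r 1 3 3 1 = gg C r 0 2 3 1"
    using gg_eq[OF d02 d13 g0213, of 3 1] by (simp add: gg_sym_ord)
  have x1313: "gg C r 1 1 1 1 + 2 * gg C r 1 1 1 3 + 2 * gg C r 1 1 3 1 + 2 * gg C r 1 1 3 3 + gg C r 1 3 1 3 + 2 * gg C r 1 3 3 1 + 2 * gg C r 1 3 3 3 + gg C r 3 1 3 1 + 2 * gg C r 3 1 3 3 + gg C r 3 3 3 3 = 3"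
    using H[of "vec4 0 1 0 1" "vec4 0 1 0 1"] by (simp add: sum4 vec4_def gg_sym_ord)
  have zg1113: "gg C r 1 1 1 3 = 0"
    using gg_zero[OF d11, of 1 3] by (simp add: gg_sym_ord)
  have r313: "gg C r 3 1 3 1 + 2 * gg C r 3 1 3 3 + gg C r 3 3 3 3 = 2"
    using H[of "vec4 0 0 0 1" "vec4 0 1 0 1"] by (simp add: sum4 vec4_def gg_sym_ord)
  have c133: "gg C r 1 3 1 3 + 2 * gg C r 1 3 3 3 + gg C r 3 3 3 3 = 2"
    using H[of "vec4 0 1 0 1" "vec4 0 0 0 1"] by (simp add: sum4 vec4_def gg_sym_ord)
  have zg1131: "gg C r 1 1 3 1 = 0"
    using gg_zero[OF d11, of 3 1] by (simp add: gg_sym_ord)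
  have zg1133: "gg C r 1 1 3 3 = 0"
    using gg_zero[OF d11, of 3 3] by (simp add: gg_sym_ord)
  have tg0132: "gg C r 0 1 3 2 = 0"
    using c031 c032 c133 d01 d02 d11 d13 d31 d32 d33 qg1331 r012 r312 r313 x0312 x1313 zg1113 zg1131 zg1133 by linarith
  have x0313: "gg C r 0 1 0 1 + 2 * gg C r 0 1 0 3 + 2 * gg C r 0 1 3 1 + 2 * gg C r 0 1 3 3 + gg C r 0 3 0 3 + 2 * gg C r 0 3 3 1 + 2 * gg C r 0 3 3 3 + gg C r 3 1 3 1 + 2 * gg C r 3 1 3 3 + gg C r 3 3 3 3 = 3"
    using H[of "vec4 1 0 0 1" "vec4 0 1 0 1"] by (simp add: sum4 vec4_def gg_sym_ord)
  have zg0331: "gg C r 0 3 3 1 = 0"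
    using gg_zero[OF d03, of 3 1] by (simp add: gg_sym_ord)
  have tg0133: "gg C r 0 1 3 3 = 0"
    using c031 d01 d03 d31 d33 r313 x0313 zg0103 zg0331 zg0333 by linarith
  have tg0210: "gg C r 0 2 1 0 = 0"
    using d10 d13 qg1013 r103 by linarith
  have tg0212: "gg C r 0 2 1 2 = 0"
    using c012 d02 d12 by linarith
  have x0202: "gg C r 0 0 0 0 + 2 * gg C r 0 0 0 2 + 2 * gg C r 0 0 2 0 + 2 * gg C r 0 0 2 2 + gg C r 0 2 0 2 + 2 * gg C r 0 2 2 0 + 2 * gg C r 0 2 2 2 + gg C r 2 0 2 0 + 2 * gg C r 2 0 2 2 + gg C r 2 2 2 2 = 3"
    using H[of "vec4 1 0 1 0" "vec4 1 0 1 0"] by (simp add: sum4 vec4_def gg_sym_ord)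
  have zg2022: "gg C r 2 0 2 2 = 0"
    using gg_zero[OF d22, of 2 0] by (simp add: gg_sym_ord)
  have zg0222: "gg C r 0 2 2 2 = 0"
    using gg_zero[OF d22, of 0 2] by (simp add: gg_sym_ord)
  have zg0022: "gg C r 0 0 2 2 = 0"
    using gg_zero[OF d22, of 0 0] by (simp add: gg_sym_ord)
  have tg0220: "gg C r 0 2 2 0 = 0"
    using c020 d00 d02 d20 d22 r002 x0202 zg0022 zg0222 zg2022 by linarith
  have x0223: "gg C r 0 2 0 2 + 2 * gg C r 0 2 0 3 + 2 * gg C r 0 2 2 2 + 2 * gg C r 0 2 2 3 + gg C r 0 3 0 3 + 2 * gg C r 0 3 2 2 + 2 * gg C r 0 3 2 3 + gg C r 2 2 2 2 + 2 * gg C r 2 2 2 3 + gg C r 2 3 2 3 = 2"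
    using H[of "vec4 1 0 1 0" "vec4 0 0 1 1"] by (simp add: sum4 vec4_def gg_sym_ord)
  have zg2223: "gg C r 2 2 2 3 = 0"
    using gg_zero[OF d22, of 2 3] by (simp add: gg_sym_ord)
  have zg0322: "gg C r 0 3 2 2 = 0"
    using gg_zero[OF d03, of 2 2] by (simp add: gg_sym_ord)
  have tg0223: "gg C r 0 2 2 3 = 0"
    using d02 d03 d22 d23 x0223 zg0203 zg0222 zg0322 zg0323 zg2223 by linarith
  have tg0231: "gg C r 0 2 3 1 = 0"
    using c133 d11 d13 d31 d33 qg1331 r313 x1313 zg1113 zg1131 zg1133 by linarith
  have tg0232: "gg C r 0 2 3 2 = 0"
    using c032 d02 d32 by linarith
  have x0323: "gg C r 0 2 0 2 + 2 * gg C r 0 2 0 3 + 2 * gg C r 0 2 3 2 + 2 * gg C r 0 2 3 3 + gg C r 0 3 0 3 + 2 * gg C r 0 3 3 2 + 2 * gg C r 0 3 3 3 + gg C r 3 2 3 2 + 2 * gg C r 3 2 3 3 + gg C r 3 3 3 3 = 3"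
    using H[of "vec4 1 0 0 1" "vec4 0 0 1 1"] by (simp add: sum4 vec4_def gg_sym_ord)
  have r323: "gg C r 3 2 3 2 + 2 * gg C r 3 2 3 3 + gg C r 3 3 3 3 = 2"
    using H[of "vec4 0 0 0 1" "vec4 0 0 1 1"] by (simp add: sum4 vec4_def gg_sym_ord)
  have zg0332: "gg C r 0 3 3 2 = 0"
    using gg_zero[OF d03, of 3 2] by (simp add: gg_sym_ord)
  have tg0233: "gg C r 0 2 3 3 = 0"
    using c032 d02 d03 d32 d33 r323 x0323 zg0203 zg0332 zg0333 by linarith
  have tg1012: "gg C r 1 0 1 2 = 0"
    using d10 d12 r102 by linarith
  have c120: "gg C r 1 0 1 0 + 2 * gg C r 1 0 2 0 + gg C r 2 0 2 0 = 2"
    using H[of "vec4 0 1 1 0" "vec4 1 0 0 0"] by (simp add: sum4 vec4_def gg_sym_ord)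
  have tg1020: "gg C r 1 0 2 0 = 0"
    using c120 d10 d20 by linarith
  have x1203: "gg C r 1 0 1 0 + 2 * gg C r 1 0 1 3 + 2 * gg C r 1 0 2 0 + 2 * gg C r 1 0 2 3 + gg C r 1 3 1 3 + 2 * gg C r 1 3 2 0 + 2 * gg C r 1 3 2 3 + gg C r 2 0 2 0 + 2 * gg C r 2 0 2 3 + gg C r 2 3 2 3 = 4"
    using H[of "vec4 0 1 1 0" "vec4 1 0 0 1"] by (simp add: sum4 vec4_def gg_sym_ord)
  have c123: "gg C r 1 3 1 3 + 2 * gg C r 1 3 2 3 + gg C r 2 3 2 3 = 2"
    using H[of "vec4 0 1 1 0" "vec4 0 0 0 1"] by (simp add: sum4 vec4_def gg_sym_ord)
  have qg1320: "gg C r 1 3 2 0 = gg C r 0 2 2 0"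
    using gg_eq[OF d02 d13 g0213, of 2 0] by (simp add: gg_sym_ord)
  have tg1023: "gg C r 1 0 2 3 = 0"
    using c020 c120 c123 d00 d02 d10 d13 d20 d22 d23 qg1320 r002 r103 r203 x0202 x1203 zg0022 zg0222 zg2022 by linarith
  have x1301: "gg C r 1 0 1 0 + 2 * gg C r 1 0 1 1 + 2 * gg C r 1 0 3 0 + 2 * gg C r 1 0 3 1 + gg C r 1 1 1 1 + 2 * gg C r 1 1 3 0 + 2 * gg C r 1 1 3 1 + gg C r 3 0 3 0 + 2 * gg C r 3 0 3 1 + gg C r 3 1 3 1 = 2"
    using H[of "vec4 0 1 0 1" "vec4 1 1 0 0"] by (simp add: sum4 vec4_def gg_sym_ord)
  have zg1030: "gg C r 1 0 3 0 = 0"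
    using gg_zero[OF d30, of 1 0] by (simp add: gg_sym_ord)
  have zg1130: "gg C r 1 1 3 0 = 0"
    using gg_zero[OF d11, of 3 0] by (simp add: gg_sym_ord)
  have tg1031: "gg C r 1 0 3 1 = 0"
    using d10 d11 d30 d31 x1301 zg1011 zg1030 zg1130 zg1131 zg3031 by linarith
  have x1302: "gg C r 1 0 1 0 + 2 * gg C r 1 0 1 2 + 2 * gg C r 1 0 3 0 + 2 * gg C r 1 0 3 2 + gg C r 1 2 1 2 + 2 * gg C r 1 2 3 0 + 2 * gg C r 1 2 3 2 + gg C r 3 0 3 0 + 2 * gg C r 3 0 3 2 + gg C r 3 2 3 2 = 3"
    using H[of "vec4 0 1 0 1" "vec4 1 0 1 0"] by (simp add: sum4 vec4_def gg_sym_ord)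
  have c132: "gg C r 1 2 1 2 + 2 * gg C r 1 2 3 2 + gg C r 3 2 3 2 = 2"
    using H[of "vec4 0 1 0 1" "vec4 0 0 1 0"] by (simp add: sum4 vec4_def gg_sym_ord)
  have zg1230: "gg C r 1 2 3 0 = 0"
    using gg_zero[OF d30, of 1 2] by (simp add: gg_sym_ord)
  have tg1032: "gg C r 1 0 3 2 = 0"
    using c132 d10 d12 d30 d32 r102 x1302 zg1030 zg1230 zg3032 by linarith
  have x1303: "gg C r 1 0 1 0 + 2 * gg C r 1 0 1 3 + 2 * gg C r 1 0 3 0 + 2 * gg C r 1 0 3 3 + gg C r 1 3 1 3 + 2 * gg C r 1 3 3 0 + 2 * gg C r 1 3 3 3 + gg C r 3 0 3 0 + 2 * gg C r 3 0 3 3 + gg C r 3 3 3 3 = 3"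
    using H[of "vec4 0 1 0 1" "vec4 1 0 0 1"] by (simp add: sum4 vec4_def gg_sym_ord)
  have zg1330: "gg C r 1 3 3 0 = 0"
    using gg_zero[OF d30, of 1 3] by (simp add: gg_sym_ord)
  have tg1033: "gg C r 1 0 3 3 = 0"
    using c133 d10 d13 d30 d33 r103 x1303 zg1030 zg1330 zg3033 by linarith
  have x1202: "gg C r 1 0 1 0 + 2 * gg C r 1 0 1 2 + 2 * gg C r 1 0 2 0 + 2 * gg C r 1 0 2 2 + gg C r 1 2 1 2 + 2 * gg C r 1 2 2 0 + 2 * gg C r 1 2 2 2 + gg C r 2 0 2 0 + 2 * gg C r 2 0 2 2 + gg C r 2 2 2 2 = 3"
    using H[of "vec4 0 1 1 0" "vec4 1 0 1 0"] by (simp add: sum4 vec4_def gg_sym_ord)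
  have zg1222: "gg C r 1 2 2 2 = 0"
    using gg_zero[OF d22, of 1 2] by (simp add: gg_sym_ord)
  have zg1022: "gg C r 1 0 2 2 = 0"
    using gg_zero[OF d22, of 1 0] by (simp add: gg_sym_ord)
  have tg1220: "gg C r 1 2 2 0 = 0"
    using c120 d10 d12 d20 d22 r102 x1202 zg1022 zg1222 zg2022 by linarith
  have x1223: "gg C r 1 2 1 2 + 2 * gg C r 1 2 1 3 + 2 * gg C r 1 2 2 2 + 2 * gg C r 1 2 2 3 + gg C r 1 3 1 3 + 2 * gg C r 1 3 2 2 + 2 * gg C r 1 3 2 3 + gg C r 2 2 2 2 + 2 * gg C r 2 2 2 3 + gg C r 2 3 2 3 = 3"
    using H[of "vec4 0 1 1 0" "vec4 0 0 1 1"] by (simp add: sum4 vec4_def gg_sym_ord)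
  have zg1322: "gg C r 1 3 2 2 = 0"
    using gg_zero[OF d22, of 1 3] by (simp add: gg_sym_ord)
  have tg1223: "gg C r 1 2 2 3 = 0"
    using c123 d12 d13 d22 d23 r123 x1223 zg1222 zg1322 zg2223 by linarith
  have x1312: "gg C r 1 1 1 1 + 2 * gg C r 1 1 1 2 + 2 * gg C r 1 1 3 1 + 2 * gg C r 1 1 3 2 + gg C r 1 2 1 2 + 2 * gg C r 1 2 3 1 + 2 * gg C r 1 2 3 2 + gg C r 3 1 3 1 + 2 * gg C r 3 1 3 2 + gg C r 3 2 3 2 = 3"
    using H[of "vec4 0 1 0 1" "vec4 0 1 1 0"] by (simp add: sum4 vec4_def gg_sym_ord)
  have zg1132: "gg C r 1 1 3 2 = 0"
    using gg_zero[OF d11, of 3 2] by (simp add: gg_sym_ord)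
  have tg1231: "gg C r 1 2 3 1 = 0"
    using c132 d11 d12 d31 d32 r312 x1312 zg1112 zg1131 zg1132 by linarith
  have tg1232: "gg C r 1 2 3 2 = 0"
    using c132 d12 d32 by linarith
  have x1323: "gg C r 1 2 1 2 + 2 * gg C r 1 2 1 3 + 2 * gg C r 1 2 3 2 + 2 * gg C r 1 2 3 3 + gg C r 1 3 1 3 + 2 * gg C r 1 3 3 2 + 2 * gg C r 1 3 3 3 + gg C r 3 2 3 2 + 2 * gg C r 3 2 3 3 + gg C r 3 3 3 3 = 4"
    using H[of "vec4 0 1 0 1" "vec4 0 0 1 1"] by (simp add: sum4 vec4_def gg_sym_ord)
  have qg1332: "gg C r 1 3 3 2 = gg C r 0 2 3 2"
    using gg_eq[OF d02 d13 g0213, of 3 2] by (simp add: gg_sym_ord)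
  have tg1233: "gg C r 1 2 3 3 = 0"
    using c032 c132 c133 d02 d12 d13 d32 d33 qg1332 r123 r323 x1323 by linarith
  have tg2023: "gg C r 2 0 2 3 = 0"
    using d20 d23 r203 by linarith
  have x2301: "gg C r 2 0 2 0 + 2 * gg C r 2 0 2 1 + 2 * gg C r 2 0 3 0 + 2 * gg C r 2 0 3 1 + gg C r 2 1 2 1 + 2 * gg C r 2 1 3 0 + 2 * gg C r 2 1 3 1 + gg C r 3 0 3 0 + 2 * gg C r 3 0 3 1 + gg C r 3 1 3 1 = 2"
    using H[of "vec4 0 0 1 1" "vec4 1 1 0 0"] by (simp add: sum4 vec4_def gg_sym_ord)
  have zg2030: "gg C r 2 0 3 0 = 0"
    using gg_zero[OF d30, of 2 0] by (simp add: gg_sym_ord)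
  have zg2131: "gg C r 2 1 3 1 = 0"
    using gg_zero[OF d21, of 3 1] by (simp add: gg_sym_ord)
  have zg2130: "gg C r 2 1 3 0 = 0"
    using gg_zero[OF d21, of 3 0] by (simp add: gg_sym_ord)
  have tg2031: "gg C r 2 0 3 1 = 0"
    using d20 d21 d30 d31 x2301 zg2021 zg2030 zg2130 zg2131 zg3031 by linarith
  have x2302: "gg C r 2 0 2 0 + 2 * gg C r 2 0 2 2 + 2 * gg C r 2 0 3 0 + 2 * gg C r 2 0 3 2 + gg C r 2 2 2 2 + 2 * gg C r 2 2 3 0 + 2 * gg C r 2 2 3 2 + gg C r 3 0 3 0 + 2 * gg C r 3 0 3 2 + gg C r 3 2 3 2 = 2"
    using H[of "vec4 0 0 1 1" "vec4 1 0 1 0"] by (simp add: sum4 vec4_def gg_sym_ord)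
  have zg2232: "gg C r 2 2 3 2 = 0"
    using gg_zero[OF d22, of 3 2] by (simp add: gg_sym_ord)
  have zg2230: "gg C r 2 2 3 0 = 0"
    using gg_zero[OF d22, of 3 0] by (simp add: gg_sym_ord)
  have tg2032: "gg C r 2 0 3 2 = 0"
    using d20 d22 d30 d32 x2302 zg2022 zg2030 zg2230 zg2232 zg3032 by linarith
  have x2303: "gg C r 2 0 2 0 + 2 * gg C r 2 0 2 3 + 2 * gg C r 2 0 3 0 + 2 * gg C r 2 0 3 3 + gg C r 2 3 2 3 + 2 * gg C r 2 3 3 0 + 2 * gg C r 2 3 3 3 + gg C r 3 0 3 0 + 2 * gg C r 3 0 3 3 + gg C r 3 3 3 3 = 3"
    using H[of "vec4 0 0 1 1" "vec4 1 0 0 1"] by (simp add: sum4 vec4_def gg_sym_ord)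
  have c233: "gg C r 2 3 2 3 + 2 * gg C r 2 3 3 3 + gg C r 3 3 3 3 = 2"
    using H[of "vec4 0 0 1 1" "vec4 0 0 0 1"] by (simp add: sum4 vec4_def gg_sym_ord)
  have zg2330: "gg C r 2 3 3 0 = 0"
    using gg_zero[OF d30, of 2 3] by (simp add: gg_sym_ord)
  have tg2033: "gg C r 2 0 3 3 = 0"
    using c233 d20 d23 d30 d33 r203 x2303 zg2030 zg2330 zg3033 by linarith
  have x2313: "gg C r 2 1 2 1 + 2 * gg C r 2 1 2 3 + 2 * gg C r 2 1 3 1 + 2 * gg C r 2 1 3 3 + gg C r 2 3 2 3 + 2 * gg C r 2 3 3 1 + 2 * gg C r 2 3 3 3 + gg C r 3 1 3 1 + 2 * gg C r 3 1 3 3 + gg C r 3 3 3 3 = 3"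
    using H[of "vec4 0 0 1 1" "vec4 0 1 0 1"] by (simp add: sum4 vec4_def gg_sym_ord)
  have zg2133: "gg C r 2 1 3 3 = 0"
    using gg_zero[OF d21, of 3 3] by (simp add: gg_sym_ord)
  have tg2331: "gg C r 2 3 3 1 = 0"
    using c233 d21 d23 d31 d33 r313 x2313 zg2123 zg2131 zg2133 by linarith
  have x2323: "gg C r 2 2 2 2 + 2 * gg C r 2 2 2 3 + 2 * gg C r 2 2 3 2 + 2 * gg C r 2 2 3 3 + gg C r 2 3 2 3 + 2 * gg C r 2 3 3 2 + 2 * gg C r 2 3 3 3 + gg C r 3 2 3 2 + 2 * gg C r 3 2 3 3 + gg C r 3 3 3 3 = 3"
    using H[of "vec4 0 0 1 1" "vec4 0 0 1 1"] by (simp add: sum4 vec4_def gg_sym_ord)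
  have zg2233: "gg C r 2 2 3 3 = 0"
    using gg_zero[OF d22, of 3 3] by (simp add: gg_sym_ord)
  have tg2332: "gg C r 2 3 3 2 = 0"
    using c233 d22 d23 d32 d33 r323 x2323 zg2223 zg2232 zg2233 by linarith
  have tg2333: "gg C r 2 3 3 3 = 0"
    using c233 d23 d33 by linarith
  have tg3132: "gg C r 3 1 3 2 = 0"
    using d31 d32 r312 by linarith
  have tg3133: "gg C r 3 1 3 3 = 0"
    using d31 d33 r313 by linarith
  have tg3233: "gg C r 3 2 3 3 = 0"
    using d32 d33 r323 by linarith
  note tgts = tg0001 tg0002 tg0010 tg0012 tg0020 tg0023 tg0031 tg0032 tg0033 tg0102 tg0110 tg0112 tg0120 tg0123 tg0131 tg0132 tg0133 tg0210 tg0212 tg0220 tg0223 tg0231 tg0232 tg0233 tg1012 tg1020 tg1023 tg1031 tg1032 tg1033 tg1220 tg1223 tg1231 tg1232 tg1233 tg2023 tg2031 tg2032 tg2033 tg2331 tg2332 tg2333 tg3132 tg3133 tg3233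
  define T :: "(nat \<times> nat) set" where "T = {(0,0), (0,1), (0,2), (1,0), (1,2), (2,0), (2,3), (3,1), (3,2), (3,3)}"
  have orthB: "\<forall>s\<in>T. \<forall>t\<in>T. gg C r (fst s) (snd s) (fst t) (snd t) = (if s = t then 1 else 0)"
    unfolding T_def using tgts d00 d01 d02 d10 d12 d20 d23 d31 d32 d33
    by (simp add: gg_sym_ord One_nat_def)
  have orth: "gg C r (fst s) (snd s) (fst t) (snd t) = (if s = t then 1 else 0)" if "s \<in> T" "t \<in> T" for s t
    using orthB that by blast
  have "card T \<le> r"
    by (rule bessel[of T "\<lambda>s p. C p (fst s) (snd s)"]) (auto simp: T_def orth[unfolded gg_def])
  moreover have "card T = 10" by (simp add: T_def)
  ultimately show ?thesis by simp
qed


lemma sos_coeffs: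
  assumes "sos_with m n P r"
  shows "\<exists>C. \<forall>x y. P x y = (\<Sum>p<r. (BB m n (C p) x y)^2)"
proof -
  obtain f where f: "\<forall>p<r. bilinear_form m n (f p)" "\<forall>x y. P x y = (\<Sum>p<r. (f p x y)^2)"
    using assms unfolding sos_with_def by blast
  have "\<forall>p. \<exists>c. p < r \<longrightarrow> (\<forall>x y. f p x y = BB m n c x y)"
    using f(1) unfolding bilinear_form_def BB_def by blast
  then obtain C where C: "\<And>p. p < r \<Longrightarrow> \<forall>x y. f p x y = BB m n (C p) x y"
    by metis
  have "\<forall>x y. P x y = (\<Sum>p<r. (BB m n (C p) x y)^2)"
    using f(2) C by simp
  then show ?thesis by blast
qed

lemma coeffs_sos:
  assumes "\<forall>x y. P x y = (\<Sum>p<r. (BB m n (C p) x y)^2)"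
  shows "sos_with m n P r"
  unfolding sos_with_def
  by (intro exI[of _ "\<lambda>p. BB m n (C p)"] conjI allI impI)
     (auto simp: bilinear_form_def BB_def assms)

lemma sos_bound:
  assumes "sos_with m n P r"
  shows "\<exists>r'\<le>m*n. sos_with m n P r'"
proof -
  obtain C where C: "\<forall>x y. P x y = (\<Sum>p<r. (BB m n (C p) x y)^2)"
    using sos_coeffs[OF assms] by blast
  define C' where "C' p i j = (if i < m \<and> j < n then C p i j else 0)" for p i j
  have BC: "BB m n (C' p) x y = BB m n (C p) x y" for p x y
    unfolding BB_def C'_def by (intro sum.cong) auto
  have supp: "\<forall>p<r. \<forall>i j. (i,j) \<notin> {..<m} \<times> {..<n} \<longrightarrow> C' p i j = 0"
    by (auto simp: C'_def)
  obtain r' c' where r': "r' \<le> card ({..<m} \<times> {..<n})"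
    "\<forall>x y. (\<Sum>p<r. (BB m n (C' p) x y)^2) = (\<Sum>p<r'. (BB m n (c' p) x y)^2)"
    using reduce[where D="{..<m} \<times> {..<n}" and m=m and n=n] supp by blast
  have "sos_with m n P r'"
    by (rule coeffs_sos[where C=c']) (use C r'(2) BC in simp)
  moreover have "r' \<le> m * n" using r'(1) by (simp add: card_cartesian_product)
  ultimately show ?thesis by blast
qed

lemma biq_of_sos:
  assumes "sos_with m n P r"
  shows "biquadratic_form m n P"
proof -
  obtain C where C: "\<forall>x y. P x y = (\<Sum>p<r. (BB m n (C p) x y)^2)"
    using sos_coeffs[OF assms] by blast
  have "P x y = (\<Sum>i<m. \<Sum>k<m. \<Sum>j<n. \<Sum>l<n. gg C r i j k l * x i * x k * y j * y l)" for x y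
  proof -
    have "P x y = (\<Sum>i<m. \<Sum>j<n. \<Sum>k<m. \<Sum>l<n. gg C r i j k l * x i * y j * x k * y l)"
      using C Qexp[where r=r and m=m and n=n and C=C and x=x and y=y] by (simp add: BB_def)
    also have "\<dots> = (\<Sum>i<m. \<Sum>k<m. \<Sum>j<n. \<Sum>l<n. gg C r i j k l * x i * y j * x k * y l)"
      by (rule sum.cong[OF refl], rule sum.swap)
    also have "\<dots> = (\<Sum>i<m. \<Sum>k<m. \<Sum>j<n. \<Sum>l<n. gg C r i j k l * x i * x k * y j * y l)"
      by (simp add: mult_ac)
    finally show ?thesis .
  qed
  then show ?thesis unfolding biquadratic_form_def by blast
qed

lemma lower_bound:
  assumes P: "P = (\<lambda>x y. (x 0)^2 * (y 0)^2 + (x 0)^2 * (y 1)^2 + (x 1)^2 * (y 0)^2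
      + (x 1)^2 * (y 2)^2 + (x 2)^2 * (y 0)^2 + (x 2)^2 * (y 3)^2 + (x 3)^2 * (y 1)^2
      + (x 3)^2 * (y 2)^2 + (x 3)^2 * (y 3)^2 + (x 0 * y 2 + x 1 * y 3)^2)"
    and s: "sos_with 4 4 P r"
  shows "10 \<le> r"
proof -
  obtain C where C: "\<forall>x y. P x y = (\<Sum>p<r. (BB 4 4 (C p) x y)^2)"
    using sos_coeffs[OF s] by blast
  show ?thesis
  proof (rule lower_core[of C r])
    fix x y :: "nat \<Rightarrow> real"
    have "P x y = (\<Sum>i<4. \<Sum>j<4. \<Sum>k<4. \<Sum>l<4. gg C r i j k l * x i * y j * x k * y l)"
      using C Qexp[where r=r and m=4 and n=4 and C=C and x=x and y=y] by (simp add: BB_def)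
    then show "(x 0)^2 * (y 0)^2 + (x 0)^2 * (y 1)^2 + (x 1)^2 * (y 0)^2
      + (x 1)^2 * (y 2)^2 + (x 2)^2 * (y 0)^2 + (x 2)^2 * (y 3)^2 + (x 3)^2 * (y 1)^2
      + (x 3)^2 * (y 2)^2 + (x 3)^2 * (y 3)^2 + (x 0 * y 2 + x 1 * y 3)^2
      = (\<Sum>i<4. \<Sum>j<4. \<Sum>k<4. \<Sum>l<4. gg C r i j k l * x i * y j * x k * y l)"
      using P by simp
  qed
qed

lemma sum10: "(\<Sum>p<(10::nat). f p) = f 0 + f 1 + f 2 + f 3 + f 4 + f 5 + f 6 + f 7 + f 8 + (f 9::real)"
  by (simp add: eval_nat_numeral)

lemma upper_10:
  assumes P: "P = (\<lambda>x y. (x 0)^2 * (y 0)^2 + (x 0)^2 * (y 1)^2 + (x 1)^2 * (y 0)^2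
      + (x 1)^2 * (y 2)^2 + (x 2)^2 * (y 0)^2 + (x 2)^2 * (y 3)^2 + (x 3)^2 * (y 1)^2
      + (x 3)^2 * (y 2)^2 + (x 3)^2 * (y 3)^2 + (x 0 * y 2 + x 1 * y 3)^2)"
  shows "sos_with 4 4 P 10"
proof (rule coeffs_sos[where C="\<lambda>(p::nat) i j. (if p = 9 then (if (i = 0 \<and> j = 2) \<or> (i = 1 \<and> j = 3) then 1 else 0) else if p = 0 then (if i = 0 \<and> j = 0 then 1 else 0) else if p = 1 then (if i = 0 \<and> j = 1 then 1 else 0) else if p = 2 then (if i = 1 \<and> j = 0 then 1 else 0) else if p = 3 then (if i = 1 \<and> j = 2 then 1 else 0) else if p = 4 then (if i = 2 \<and> j = 0 then 1 else 0) else if p = 5 then (if i = 2 \<and> j = 3 then 1 else 0) else if p = 6 then (if i = 3 \<and> j = 1 then 1 else 0) else if p = 7 then (if i = 3 \<and> j = 2 then 1 else 0) else if p = 8 then (if i = 3 \<and> j = 3 then 1 else 0) else 0)"], intro allI)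
  fix x y :: "nat \<Rightarrow> real"
  show "P x y = (\<Sum>p<(10::nat). (BB 4 4 (\<lambda>i j. (if p = 9 then (if (i = 0 \<and> j = 2) \<or> (i = 1 \<and> j = 3) then 1 else 0) else if p = 0 then (if i = 0 \<and> j = 0 then 1 else 0) else if p = 1 then (if i = 0 \<and> j = 1 then 1 else 0) else if p = 2 then (if i = 1 \<and> j = 0 then 1 else 0) else if p = 3 then (if i = 1 \<and> j = 2 then 1 else 0) else if p = 4 then (if i = 2 \<and> j = 0 then 1 else 0) else if p = 5 then (if i = 2 \<and> j = 3 then 1 else 0) else if p = 6 then (if i = 3 \<and> j = 1 then 1 else 0) else if p = 7 then (if i = 3 \<and> j = 2 then 1 else 0) else if p = 8 then (if i = 3 \<and> j = 3 then 1 else 0) else 0)) x y)^2)"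
    using P by (simp add: sum10 BB_def sum4 power_mult_distrib)
qed

theorem corollary3p2:
  fixes P :: "(nat \<Rightarrow> real) \<Rightarrow> (nat \<Rightarrow> real) \<Rightarrow> real"
  assumes "P = (\<lambda>x y. (x 0)^2 * (y 0)^2 + (x 0)^2 * (y 1)^2 + (x 1)^2 * (y 0)^2
      + (x 1)^2 * (y 2)^2 + (x 2)^2 * (y 0)^2 + (x 2)^2 * (y 3)^2 + (x 3)^2 * (y 1)^2
      + (x 3)^2 * (y 2)^2 + (x 3)^2 * (y 3)^2 + (x 0 * y 2 + x 1 * y 3)^2)"
  shows "biquadratic_form 4 4 P \<and> is_sos 4 4 P \<and> sos_rank 4 4 P = 10 \<and> BSR 4 4 \<ge> 10"
proof -
  have s10: "sos_with 4 4 P 10" by (rule upper_10[OF assms])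
  have biq: "biquadratic_form 4 4 P" by (rule biq_of_sos[OF s10])
  have sos: "is_sos 4 4 P" using s10 unfolding is_sos_def by blast
  have rk: "sos_rank 4 4 P = 10"
    unfolding sos_rank_def
    by (rule Least_equality) (use s10 lower_bound[OF assms] in auto)
  define A where "A = {sos_rank 4 4 Q | Q. biquadratic_form 4 4 Q \<and> is_sos 4 4 Q}"
  have "A \<subseteq> {..16}"
  proof
    fix k assume "k \<in> A"
    then obtain Q where k: "k = sos_rank 4 4 Q" and Q: "is_sos 4 4 Q" unfolding A_def by blast
    obtain r where "sos_with 4 4 Q r" using Q unfolding is_sos_def by blast
    then obtain r' where r': "r' \<le> 4 * 4" "sos_with 4 4 Q r'" using sos_bound by blast
    have "k \<le> r'" unfolding k sos_rank_def by (rule Least_le) (rule r'(2))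
    then show "k \<in> {..16}" using r'(1) by simp
  qed
  then have fin: "finite A" by (rule finite_subset) simp
  have "10 \<in> A" unfolding A_def using biq sos rk[symmetric] by blast
  then have "10 \<le> Max A" using fin by (rule Max_ge[rotated])
  then have "BSR 4 4 \<ge> 10" unfolding BSR_def A_def by simp
  then show ?thesis using biq sos rk by blast
qed

end
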